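(* Let $T:(0,\infty)\to(0,\infty)$ be an integrable, non-decreasing and unbounded function, and suppose $\varphi$ is differentiable. Then $T$ has $\varphi$-order $\rho_\varphi(T)=\rho\in[0,\infty)$ if and only if the integral $$\int^\infty\frac{\varphi'(t)T(t)}{\varphi(t)^{\mu+1}}\,dt$$ converges for every $\mu>\rho$ and diverges for every $\mu<\rho$. Moreover, if $\rho_\varphi(T)=\infty$, then this integral diverges for every $\mu\in\mathbb{R}$.
   Context: Let $R_0>0$. $\varphi:(R_0,\infty)\to(0,\infty)$ is a non-decreasing unbounded function with $\log r\le\varphi(r)\le r$ for $r\ge R_0$. For a non-decreasing positive function $T$, $\rho_\varphi(T)=\limsup_{r\to\infty}\frac{\log T(r)}{\log\varphi(r)}$. The lower limit of integration is any fixed sufficiently large number. *)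

theory Defs
  imports "HOL-Analysis.Analysis"
begin

definition phi_order :: "(real \<Rightarrow> real) \<Rightarrow> (real \<Rightarrow> real) \<Rightarrow> ereal" where
  "phi_order \<phi> T = Limsup at_top (\<lambda>r. ereal (ln (T r) / ln (\<phi> r)))"

definition improper_int_converges :: "(real \<Rightarrow> real) \<Rightarrow> bool" where
  "improper_int_converges f \<longleftrightarrow> (\<forall>\<^sub>F a in at_top. f integrable_on {a..})"

end

theory Submission
  imports Defs
begin

locale L =
  fixes \<phi> T :: "real \<Rightarrow> real" and R\<^sub>0 :: real
  assumes R0_pos: "R\<^sub>0 > 0"
    and phi_pos: "\<forall>r>R\<^sub>0. \<phi> r > 0"
    and phi_mono: "mono_on {R\<^sub>0<..} \<phi>"
    and phi_unbdd: "\<forall>M. \<exists>r>R\<^sub>0. \<phi> r > M"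
    and phi_diff: "\<forall>r>R\<^sub>0. \<phi> differentiable (at r)"
    and T_pos: "\<forall>t>0. T t > 0"
    and T_mono: "mono_on {0<..} T"
    and T_unbdd: "\<forall>M. \<exists>t>0. T t > M"
begin

definition f :: "real \<Rightarrow> real \<Rightarrow> real" where
  "f \<mu> t = deriv \<phi> t * T t / \<phi> t powr (\<mu> + 1)"

lemma D: "r > R\<^sub>0 \<Longrightarrow> (\<phi> has_real_derivative deriv \<phi> r) (at r)"
  using phi_diff DERIV_deriv_iff_real_differentiable by blast

lemma cont: "r > R\<^sub>0 \<Longrightarrow> isCont \<phi> r"
  using D DERIV_isCont by blast

lemma Dnn: assumes "r > R\<^sub>0" shows "deriv \<phi> r \<ge> 0"
proof (rule ccontr)
  assume "\<not> ?thesis"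
  then obtain d where d: "d > 0" "\<forall>h>0. h < d \<longrightarrow> \<phi> r > \<phi> (r + h)"
    using DERIV_neg_dec_right[OF D[OF assms]] by force
  then have "\<phi> r > \<phi> (r + d/2)" by auto
  moreover have "\<phi> r \<le> \<phi> (r + d/2)"
    using phi_mono assms d(1) by (auto intro: mono_onD)
  ultimately show False by simp
qed

lemma phi_lim: "filterlim \<phi> at_top at_top"
  unfolding filterlim_at_top
proof
  fix M
  obtain r where r: "r > R\<^sub>0" "\<phi> r > M" using phi_unbdd by blast
  show "\<forall>\<^sub>F x in at_top. M \<le> \<phi> x"
    unfolding eventually_at_top_linorder
  proof (intro exI allI impI)
    fix x assume "x \<ge> r"
    then have "\<phi> r \<le> \<phi> x" using phi_mono r(1) by (auto intro: mono_onD)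
    then show "M \<le> \<phi> x" using r by simp
  qed
qed

lemma T_lim: "filterlim T at_top at_top"
  unfolding filterlim_at_top
proof
  fix M
  obtain r where r: "r > 0" "T r > M" using T_unbdd by blast
  show "\<forall>\<^sub>F x in at_top. M \<le> T x"
    unfolding eventually_at_top_linorder
  proof (intro exI allI impI)
    fix x assume "x \<ge> r"
    then have "T r \<le> T x" using T_mono r(1) by (auto intro: mono_onD)
    then show "M \<le> T x" using r by simp
  qed
qed

lemma FTC:
  assumes "R\<^sub>0 < a" "a \<le> b" "\<mu> \<noteq> 0"
  shows "((\<lambda>t. deriv \<phi> t * \<phi> t powr (-\<mu>-1)) has_integral
          (\<phi> b powr (-\<mu>) - \<phi> a powr (-\<mu>)) / (-\<mu>)) {a..b}"
proof -
  have "((\<lambda>t. \<phi> t powr (-\<mu>) / (-\<mu>)) has_vector_derivative deriv \<phi> t * \<phi> t powr (-\<mu>-1))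
          (at t within {a..b})" if "t \<in> {a..b}" for t
  proof -
    have t: "t > R\<^sub>0" using that assms by auto
    have "((\<lambda>t. \<phi> t powr (-\<mu>)) has_real_derivative (-\<mu>) * \<phi> t powr (-\<mu> - of_nat 1) * deriv \<phi> t) (at t)"
      by (rule DERIV_fun_powr[OF D[OF t]]) (use phi_pos t in auto)
    then have "((\<lambda>t. \<phi> t powr (-\<mu>) / (-\<mu>)) has_real_derivative deriv \<phi> t * \<phi> t powr (-\<mu>-1)) (at t)"
    proof -
      have X: "((\<lambda>t. \<phi> t powr (-\<mu>) / (-\<mu>)) has_real_derivative (-\<mu>) * \<phi> t powr (-\<mu> - of_nat 1) * deriv \<phi> t / (-\<mu>)) (at t)"
        by (rule DERIV_cdivide) fact
      have "(-\<mu>) * \<phi> t powr (-\<mu> - of_nat 1) * deriv \<phi> t / (-\<mu>) = deriv \<phi> t * \<phi> t powr (-\<mu>-1)"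
        using assms(3) by simp
      then show ?thesis using X by metis
    qed
    then show ?thesis
      using has_real_derivative_iff_has_vector_derivative has_vector_derivative_at_within by blast
  qed
  from fundamental_theorem_of_calculus[OF assms(2) this] show ?thesis
    by (simp add: diff_divide_distrib)
qed

lemma borel_leb: "(g::real\<Rightarrow>real) \<in> borel_measurable borel \<Longrightarrow> g \<in> borel_measurable (lebesgue_on S)"
  by (simp add: measurable_completion measurable_restrict_space1)

lemma phi_cont_on: "a > R\<^sub>0 \<Longrightarrow> continuous_on {a..} \<phi>"
  using cont by (intro continuous_at_imp_continuous_on) auto

lemma phimax_meas: assumes "a > R\<^sub>0" shows "(\<lambda>x. \<phi> (max a x)) \<in> borel_measurable borel"
proof -
  have "continuous_on UNIV (\<lambda>x. \<phi> (max a x))"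
    by (rule continuous_on_compose2[OF phi_cont_on[OF assms]]) (auto intro!: continuous_intros)
  then show ?thesis by (rule borel_measurable_continuous_onI)
qed

lemma Tmax_meas: assumes "a > 0" shows "(\<lambda>x. T (max a x)) \<in> borel_measurable borel"
proof (rule borel_measurable_mono)
  show "mono (\<lambda>x. T (max a x))"
    using T_mono assms by (auto intro!: monoI mono_onD[OF T_mono])
qed

lemma k_meas: assumes "a > R\<^sub>0"
  shows "(\<lambda>x. T (max a x) * \<phi> (max a x) powr p) \<in> borel_measurable (lebesgue_on S)"
proof (rule borel_leb)
  have "a > 0" using assms R0_pos by simp
  show "(\<lambda>x. T (max a x) * \<phi> (max a x) powr p) \<in> borel_measurable borel"
    by (intro borel_measurable_times Tmax_meas[OF \<open>a > 0\<close>] powr_real_measurable phimax_meas[OF assms] borel_measurable_const)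
qed

lemma k2_meas: assumes "a > R\<^sub>0"
  shows "(\<lambda>x. \<phi> (max a x) powr p) \<in> borel_measurable (lebesgue_on S)"
  by (intro borel_leb powr_real_measurable phimax_meas[OF assms] borel_measurable_const)

lemma G_int:
  assumes "R\<^sub>0 < a" "\<delta> > 0"
  shows "(\<lambda>t. deriv \<phi> t * \<phi> t powr (-\<delta>-1)) integrable_on {a..}"
proof -
  have "((\<lambda>t. deriv \<phi> t * \<phi> t powr (-\<delta>-1)) has_integral (0 - \<phi> a powr (-\<delta>)) / (-\<delta>)) {a..}"
  proof (rule has_integral_to_inf)
    fix y
    show "(\<lambda>t. deriv \<phi> t * \<phi> t powr (-\<delta>-1)) integrable_on {a..y}"
    proof (cases "a \<le> y")
      case True then show ?thesis using FTC[OF assms(1) True, of \<delta>] assms unfolding integrable_on_def by auto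
    qed auto
  next
    fix y assume "a \<le> y"
    then show "0 \<le> deriv \<phi> y * \<phi> y powr (-\<delta>-1)" using Dnn assms by auto
  next
    have "\<forall>\<^sub>F y in at_top. (\<phi> y powr (-\<delta>) - \<phi> a powr (-\<delta>)) / (-\<delta>) = integral {a..y} (\<lambda>t. deriv \<phi> t * \<phi> t powr (-\<delta>-1))"
      unfolding eventually_at_top_linorder
    proof (intro exI allI impI)
      fix y assume "y \<ge> a"
      then show "(\<phi> y powr (-\<delta>) - \<phi> a powr (-\<delta>)) / (-\<delta>) = integral {a..y} (\<lambda>t. deriv \<phi> t * \<phi> t powr (-\<delta>-1))"
        using integral_unique[OF FTC[OF assms(1) \<open>y \<ge> a\<close>, of \<delta>]] assms by simp
    qed
    moreover have "((\<lambda>y. (\<phi> y powr (-\<delta>) - \<phi> a powr (-\<delta>)) / (-\<delta>)) \<longlongrightarrow> (0 - \<phi> a powr (-\<delta>)) / (-\<delta>)) at_top"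
    proof -
      have L0: "((\<lambda>y. \<phi> y powr (-\<delta>)) \<longlongrightarrow> 0) at_top"
        by (rule tendsto_neg_powr) (use assms phi_lim in auto)
      show ?thesis
        by (rule tendsto_divide[OF tendsto_diff[OF L0 tendsto_const] tendsto_const]) (use assms in simp)
    qed
    ultimately show "((\<lambda>y. integral {a..y} (\<lambda>t. deriv \<phi> t * \<phi> t powr (-\<delta>-1))) \<longlongrightarrow> (0 - \<phi> a powr (-\<delta>)) / (-\<delta>)) at_top"
      by (rule Lim_transform_eventually[rotated])
  qed
  then show ?thesis unfolding integrable_on_def by (rule exI)
qed

lemma f_eq: "f \<mu> = (\<lambda>t. deriv \<phi> t * T t / \<phi> t powr (\<mu> + 1))"
  by (rule ext) (simp add: f_def)

lemma pm: "(x::real) powr (-m-1) = inverse (x powr (m+1))"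
proof -
  have "-m-1 = -(m+1)" by simp
  then show ?thesis by (simp only: powr_minus)
qed

lemma f_nonneg: assumes "t > R\<^sub>0" shows "0 \<le> f \<mu> t"
proof -
  have "T t > 0" "\<phi> t > 0" "deriv \<phi> t \<ge> 0" using Dnn[OF assms] T_pos phi_pos R0_pos assms by auto
  then show ?thesis unfolding f_def by simp
qed

lemma PB: assumes "p > 0" shows "\<forall>\<^sub>F t in at_top. M < \<phi> t powr p"
proof -
  have "\<forall>\<^sub>F t in at_top. max 1 M powr (1/p) < \<phi> t"
    using phi_lim by (simp add: filterlim_at_top_dense)
  then show ?thesis
  proof (rule eventually_mono)
    fix t assume t: "max 1 M powr (1/p) < \<phi> t"
    have "max 1 M = (max 1 M powr (1/p)) powr p"
      using assms by (simp add: powr_powr)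
    also have "\<dots> < \<phi> t powr p"
      by (rule powr_less_mono2) (use assms t in auto)
    finally show "M < \<phi> t powr p" by simp
  qed
qed

lemma abs_int_imp_int: "(g::real\<Rightarrow>real) absolutely_integrable_on S \<Longrightarrow> g integrable_on S"
  by (rule set_lebesgue_integral_eq_integral(1))

lemma conv:
  assumes ev: "\<forall>\<^sub>F t in at_top. T t \<le> \<phi> t powr \<kappa>" and "\<kappa> < \<mu>"
  shows "improper_int_converges (f \<mu>)"
proof -
  obtain A where A: "\<And>t. t \<ge> A \<Longrightarrow> T t \<le> \<phi> t powr \<kappa>"
    using ev unfolding eventually_at_top_linorder by blast
  define \<delta> where "\<delta> = \<mu> - \<kappa>"
  have \<delta>: "\<delta> > 0" using assms by (simp add: \<delta>_def)
  have "f \<mu> integrable_on {a..}" if a: "a \<ge> max A (R\<^sub>0+1)" for a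
  proof -
    have aR: "a > R\<^sub>0" using a by simp
    let ?g = "\<lambda>t. deriv \<phi> t * \<phi> t powr (-\<delta>-1)"
    let ?k = "\<lambda>x. T (max a x) * \<phi> (max a x) powr (-\<kappa>)"
    have g: "?g absolutely_integrable_on {a..}"
      by (rule nonnegative_absolutely_integrable_1[OF G_int[OF aR \<delta>]])
         (use Dnn aR in auto)
    have kb: "0 \<le> ?k x \<and> ?k x \<le> 1" if "x \<in> {a..}" for x
    proof -
      have x: "max a x = x" "x > R\<^sub>0" "x \<ge> A" using that aR a by auto
      have p: "\<phi> x > 0" using phi_pos x by auto
      have Tp: "T x > 0" using T_pos x R0_pos by auto
      have "T x * \<phi> x powr (-\<kappa>) \<le> \<phi> x powr \<kappa> * \<phi> x powr (-\<kappa>)"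
        using A[OF x(3)] by (intro mult_right_mono) auto
      also have "\<dots> = 1" using p by (simp add: powr_add[symmetric])
      finally show ?thesis using x Tp by simp
    qed
    have "bounded (?k ` {a..})"
      unfolding bounded_iff using kb by (intro exI[of _ 1]) auto
    then have "(\<lambda>x. ?k x * ?g x) absolutely_integrable_on {a..}"
      by (intro absolutely_integrable_bounded_measurable_product_real k_meas aR g) auto
    then have "(\<lambda>x. ?k x * ?g x) integrable_on {a..}" by (rule abs_int_imp_int)
    moreover have "?k x * ?g x = f \<mu> x" if "x \<in> {a..}" for x
    proof -
      have x: "max a x = x" "x > R\<^sub>0" using that aR by auto
      have p: "\<phi> x > 0" using phi_pos x by auto
      have "\<phi> x powr (-\<kappa>) * \<phi> x powr (-\<delta>-1) = \<phi> x powr (-(\<mu>+1))"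
        using p by (simp add: powr_add[symmetric] \<delta>_def)
      also have "\<dots> = 1 / \<phi> x powr (\<mu>+1)" by (simp only: powr_minus divide_inverse)
      finally have e: "\<phi> x powr (-\<kappa>) * \<phi> x powr (-\<delta>-1) = 1 / \<phi> x powr (\<mu>+1)" .
      have "?k x * ?g x = deriv \<phi> x * T x * (\<phi> x powr (-\<kappa>) * \<phi> x powr (-\<delta>-1))"
        using x by (simp add: algebra_simps)
      also have "\<dots> = f \<mu> x" unfolding e f_def by simp
      finally show ?thesis .
    qed
    ultimately show ?thesis using integrable_cong[of "{a..}" "\<lambda>x. ?k x * ?g x" "f \<mu>"] by simp
  qed
  then show ?thesis
    unfolding improper_int_converges_def eventually_at_top_linorder by blast
qed

lemma LB:
  assumes "R\<^sub>0 < r" "r \<le> b" "\<mu> \<noteq> 0" "f \<mu> integrable_on {r..b}"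
  shows "T r * ((\<phi> b powr (-\<mu>) - \<phi> r powr (-\<mu>)) / (-\<mu>)) \<le> integral {r..b} (f \<mu>)"
proof (rule has_integral_le)
  show "((\<lambda>t. T r * (deriv \<phi> t * \<phi> t powr (-\<mu>-1))) has_integral T r * ((\<phi> b powr (-\<mu>) - \<phi> r powr (-\<mu>)) / (-\<mu>))) {r..b}"
    by (rule has_integral_mult_right[OF FTC[OF assms(1-3)]])
  show "(f \<mu> has_integral integral {r..b} (f \<mu>)) {r..b}" using assms(4) by blast
  fix t assume t: "t \<in> {r..b}"
  then have tR: "t > R\<^sub>0" using assms by auto
  have p: "\<phi> t > 0" using phi_pos tR by auto
  have "T r \<le> T t" using t assms R0_pos by (auto intro!: mono_onD[OF T_mono])
  moreover have "0 \<le> deriv \<phi> t * \<phi> t powr (-\<mu>-1)" using Dnn tR by auto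
  ultimately have "T r * (deriv \<phi> t * \<phi> t powr (-\<mu>-1)) \<le> T t * (deriv \<phi> t * \<phi> t powr (-\<mu>-1))"
    by (rule mult_right_mono)
  also have "\<dots> = f \<mu> t"
  proof -
    have "\<phi> t powr (-\<mu>-1) = 1 / \<phi> t powr (\<mu>+1)"
      using pm[of "\<phi> t" \<mu>] by (simp add: divide_inverse)
    then show ?thesis by (simp add: f_def)
  qed
  finally show "T r * (deriv \<phi> t * \<phi> t powr (-\<mu>-1)) \<le> f \<mu> t" .
qed

lemma UB:
  assumes "a \<le> r" "R\<^sub>0 < a" "f \<mu> integrable_on {a..}"
  shows "f \<mu> integrable_on {r..b}" "integral {r..b} (f \<mu>) \<le> integral {a..} (f \<mu>)"
proof -
  show i: "f \<mu> integrable_on {r..b}"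
    by (rule integrable_on_subinterval[OF assms(3)]) (use assms in auto)
  show "integral {r..b} (f \<mu>) \<le> integral {a..} (f \<mu>)"
    by (rule integral_subset_le[OF _ i assms(3)]) (use assms f_nonneg in auto)
qed

lemma get_a:
  assumes "improper_int_converges (f \<mu>)"
  obtains a where "a > R\<^sub>0" "f \<mu> integrable_on {a..}" "a \<ge> B"
proof -
  obtain a0 where a0: "\<And>a. a \<ge> a0 \<Longrightarrow> f \<mu> integrable_on {a..}"
    using assms unfolding improper_int_converges_def eventually_at_top_linorder by blast
  show ?thesis
    by (rule that[of "max (max a0 B) (R\<^sub>0+1)"]) (auto intro: a0)
qed

lemma div_pos:
  assumes "\<mu> > 0" "\<kappa> > \<mu>" and fr: "\<exists>\<^sub>F t in at_top. \<phi> t powr \<kappa> \<le> T t"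
  shows "\<not> improper_int_converges (f \<mu>)"
proof
  assume "improper_int_converges (f \<mu>)"
  then obtain a where a: "a > R\<^sub>0" "f \<mu> integrable_on {a..}" by (rule get_a)
  define I where "I = integral {a..} (f \<mu>)"
  have I0: "I \<ge> 0" unfolding I_def
    by (rule integral_nonneg[OF a(2)]) (use f_nonneg a in auto)
  have C: "T r * \<phi> r powr (-\<mu>) \<le> 2*\<mu>*I" if r: "r \<ge> a" for r
  proof -
    have rR: "r > R\<^sub>0" using r a by simp
    define p where "p = \<phi> r powr (-\<mu>)"
    have "\<phi> r > 0" using phi_pos rR by simp
    then have p: "p > 0" by (simp add: p_def)
    have Tr: "T r > 0" using T_pos rR R0_pos by simp
    have "((\<lambda>b. \<phi> b powr (-\<mu>)) \<longlongrightarrow> 0) at_top"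
      by (rule tendsto_neg_powr) (use assms phi_lim in auto)
    from order_tendstoD(2)[OF this, of "p/2"] p
    have "\<forall>\<^sub>F b in at_top. \<phi> b powr (-\<mu>) < p/2" by simp
    then obtain b0 where b0: "\<And>b. b \<ge> b0 \<Longrightarrow> \<phi> b powr (-\<mu>) < p/2"
      unfolding eventually_at_top_linorder by blast
    define b where "b = max b0 r"
    have b: "b \<ge> r" "\<phi> b powr (-\<mu>) < p/2" using b0[of b] by (auto simp: b_def)
    have "T r * ((\<phi> b powr (-\<mu>) - p) / (-\<mu>)) \<le> integral {r..b} (f \<mu>)"
      unfolding p_def by (rule LB[OF rR b(1)]) (use assms UB(1)[OF r a(1,2)] in auto)
    also have "\<dots> \<le> I" unfolding I_def by (rule UB(2)[OF r a(1,2)])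
    finally have 1: "T r * ((\<phi> b powr (-\<mu>) - p) / (-\<mu>)) \<le> I" .
    have "(\<phi> b powr (-\<mu>) - p) / (-\<mu>) = (p - \<phi> b powr (-\<mu>)) / \<mu>"
      using assms by (simp add: field_simps)
    also have "\<dots> \<ge> (p/2) / \<mu>" using b(2) assms by (intro divide_right_mono) auto
    finally have "T r * ((p/2)/\<mu>) \<le> T r * ((\<phi> b powr (-\<mu>) - p) / (-\<mu>))"
      using Tr by (intro mult_left_mono) auto
    with 1 have "T r * ((p/2)/\<mu>) \<le> I" by linarith
    then have "T r * p \<le> 2*\<mu>*I" using assms by (simp add: field_simps)
    then show ?thesis by (simp add: p_def)
  qed
  have "\<forall>\<^sub>F t in at_top. 2*\<mu>*I < \<phi> t powr (\<kappa>-\<mu>) \<and> t \<ge> a \<and> t > R\<^sub>0"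
    using PB[of "\<kappa>-\<mu>" "2*\<mu>*I"] assms eventually_ge_at_top[of a] eventually_gt_at_top[of R\<^sub>0]
    by (intro eventually_conj) auto
  from frequently_ex[OF frequently_eventually_frequently[OF fr this]]
  obtain t where t: "\<phi> t powr \<kappa> \<le> T t" "2*\<mu>*I < \<phi> t powr (\<kappa>-\<mu>)" "t \<ge> a" "t > R\<^sub>0" by blast
  have p: "\<phi> t > 0" using phi_pos t by auto
  have "\<phi> t powr (\<kappa>-\<mu>) = \<phi> t powr \<kappa> * \<phi> t powr (-\<mu>)"
    by (simp add: powr_add[symmetric])
  also have "\<dots> \<le> T t * \<phi> t powr (-\<mu>)" using t(1) by (intro mult_right_mono) auto
  also have "\<dots> \<le> 2*\<mu>*I" using C t by auto
  finally show False using t(2) by simp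
qed

lemma div_neg:
  assumes "\<mu> < 0"
  shows "\<not> improper_int_converges (f \<mu>)"
proof
  assume "improper_int_converges (f \<mu>)"
  then obtain a where a: "a > R\<^sub>0" "f \<mu> integrable_on {a..}" by (rule get_a)
  define I where "I = integral {a..} (f \<mu>)"
  have Ta: "T a > 0" using T_pos a R0_pos by simp
  have "\<forall>\<^sub>F t in at_top. \<phi> a powr (-\<mu>) + (-\<mu>)*I/T a < \<phi> t powr (-\<mu>) \<and> t \<ge> a"
    using PB[of "-\<mu>" "\<phi> a powr (-\<mu>) + (-\<mu>)*I/T a"] assms eventually_ge_at_top[of a]
    by (intro eventually_conj) auto
  then obtain b where b: "\<phi> a powr (-\<mu>) + (-\<mu>)*I/T a < \<phi> b powr (-\<mu>)" "b \<ge> a"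
    unfolding eventually_at_top_linorder by auto
  have "T a * ((\<phi> b powr (-\<mu>) - \<phi> a powr (-\<mu>)) / (-\<mu>)) \<le> integral {a..b} (f \<mu>)"
    by (rule LB[OF a(1) b(2)]) (use assms UB(1)[OF _ a(1,2)] in auto)
  also have "\<dots> \<le> I" unfolding I_def by (rule UB(2)[OF _ a(1,2)]) simp
  finally have 1: "T a * ((\<phi> b powr (-\<mu>) - \<phi> a powr (-\<mu>)) / (-\<mu>)) \<le> I" .
  have "(-\<mu>)*I/T a < \<phi> b powr (-\<mu>) - \<phi> a powr (-\<mu>)" using b by simp
  then have "(-\<mu>)*I < T a * (\<phi> b powr (-\<mu>) - \<phi> a powr (-\<mu>))"
    using Ta by (simp add: field_simps)
  then have "I < T a * ((\<phi> b powr (-\<mu>) - \<phi> a powr (-\<mu>)) / (-\<mu>))"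
    using assms by (simp add: field_simps)
  with 1 show False by simp
qed

lemma conv_mono:
  assumes "\<mu> \<le> \<mu>'" "improper_int_converges (f \<mu>)"
  shows "improper_int_converges (f \<mu>')"
proof -
  obtain A1 where A1: "\<And>t. t \<ge> A1 \<Longrightarrow> 1 \<le> \<phi> t"
    using phi_lim unfolding filterlim_at_top eventually_at_top_linorder by blast
  obtain a0 where a0: "\<And>a. a \<ge> a0 \<Longrightarrow> f \<mu> integrable_on {a..}"
    using assms unfolding improper_int_converges_def eventually_at_top_linorder by blast
  have "f \<mu>' integrable_on {a..}" if a: "a \<ge> max (max a0 A1) (R\<^sub>0+1)" for a
  proof -
    have aR: "a > R\<^sub>0" using a by simp
    let ?k = "\<lambda>x. \<phi> (max a x) powr (\<mu>-\<mu>')"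
    have g: "f \<mu> absolutely_integrable_on {a..}"
      by (rule nonnegative_absolutely_integrable_1[OF a0]) (use f_nonneg aR a in auto)
    have kb: "0 \<le> ?k x \<and> ?k x \<le> 1" if "x \<in> {a..}" for x
    proof -
      have x: "max a x = x" "x \<ge> A1" using that a by auto
      have "1 \<le> \<phi> x" using A1 x by simp
      then have "\<phi> x powr (\<mu>-\<mu>') \<le> 1" using assms(1)
        using powr_mono[of "\<mu>-\<mu>'" 0 "\<phi> x"] by simp
      then show ?thesis using x by simp
    qed
    have "bounded (?k ` {a..})"
      unfolding bounded_iff using kb by (intro exI[of _ 1]) auto
    then have "(\<lambda>x. ?k x * f \<mu> x) absolutely_integrable_on {a..}"
      by (intro absolutely_integrable_bounded_measurable_product_real k2_meas aR g) auto
    then have "(\<lambda>x. ?k x * f \<mu> x) integrable_on {a..}" by (rule abs_int_imp_int)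
    moreover have "?k x * f \<mu> x = f \<mu>' x" if "x \<in> {a..}" for x
    proof -
      have x: "max a x = x" "x > R\<^sub>0" using that aR by auto
      have p: "\<phi> x > 0" using phi_pos x by auto
      have "\<phi> x powr (\<mu>-\<mu>') / \<phi> x powr (\<mu>+1) = \<phi> x powr ((\<mu> - \<mu>') - (\<mu>+1))"
        by (rule powr_diff[symmetric])
      also have "\<dots> = \<phi> x powr (-\<mu>'-1)" by simp
      also have "\<dots> = 1 / \<phi> x powr (\<mu>'+1)"
        using pm[of "\<phi> x" \<mu>'] by (simp add: divide_inverse)
      finally have e: "\<phi> x powr (\<mu>-\<mu>') / \<phi> x powr (\<mu>+1) = 1 / \<phi> x powr (\<mu>'+1)" .
      have "?k x * f \<mu> x = deriv \<phi> x * T x * (\<phi> x powr (\<mu>-\<mu>') / \<phi> x powr (\<mu>+1))"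
        using x by (simp add: f_def)
      also have "\<dots> = f \<mu>' x" unfolding e f_def by simp
      finally show ?thesis .
    qed
    ultimately show ?thesis using integrable_cong[of "{a..}" "\<lambda>x. ?k x * f \<mu> x" "f \<mu>'"] by simp
  qed
  then show ?thesis
    unfolding improper_int_converges_def eventually_at_top_linorder by blast
qed

lemma ev_basic: "\<forall>\<^sub>F t in at_top. 0 < ln (\<phi> t) \<and> 1 \<le> T t \<and> R\<^sub>0 < t"
proof -
  have "\<forall>\<^sub>F t in at_top. 1 < \<phi> t" using phi_lim by (simp add: filterlim_at_top_dense)
  moreover have "\<forall>\<^sub>F t in at_top. 1 \<le> T t" using T_lim by (simp add: filterlim_at_top)
  ultimately have "\<forall>\<^sub>F t in at_top. 1 < \<phi> t \<and> 1 \<le> T t \<and> R\<^sub>0 < t"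
    using eventually_gt_at_top[of R\<^sub>0] by (intro eventually_conj)
  then show ?thesis by (rule eventually_mono) simp
qed

lemma O1: "phi_order \<phi> T \<ge> 0"
  unfolding phi_order_def
proof (rule le_Limsup)
  show "(at_top::real filter) \<noteq> bot" by simp
  show "\<forall>\<^sub>F x in at_top. 0 \<le> ereal (ln (T x) / ln (\<phi> x))"
    using ev_basic by eventually_elim auto
qed

lemma O2:
  assumes "phi_order \<phi> T < ereal c"
  shows "\<forall>\<^sub>F t in at_top. T t \<le> \<phi> t powr c"
proof -
  have "\<forall>\<^sub>F t in at_top. ereal (ln (T t) / ln (\<phi> t)) < ereal c"
    using Limsup_lessD[OF assms[unfolded phi_order_def]] .
  then show ?thesis using ev_basic
  proof eventually_elim
    case (elim t)
    then have l: "ln (T t) / ln (\<phi> t) < c" "0 < ln (\<phi> t)" "1 \<le> T t" "\<phi> t > 0"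
      using phi_pos by auto
    then have "ln (T t) < c * ln (\<phi> t)" by (simp add: pos_divide_less_eq)
    then have "exp (ln (T t)) \<le> exp (c * ln (\<phi> t))" by simp
    then show ?case using l by (simp add: powr_def)
  qed
qed

lemma O3:
  assumes "ereal c < phi_order \<phi> T"
  shows "\<exists>\<^sub>F t in at_top. \<phi> t powr c \<le> T t"
proof (rule ccontr)
  assume "\<not> ?thesis"
  then have "\<forall>\<^sub>F t in at_top. \<not> \<phi> t powr c \<le> T t" by (simp add: not_frequently)
  then have "\<forall>\<^sub>F t in at_top. ereal (ln (T t) / ln (\<phi> t)) \<le> ereal c" using ev_basic
  proof eventually_elim
    case (elim t)
    then have l: "T t < \<phi> t powr c" "0 < ln (\<phi> t)" "1 \<le> T t" "\<phi> t > 0"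
      using phi_pos by auto
    then have "exp (ln (T t)) < exp (c * ln (\<phi> t))" by (simp add: powr_def)
    then have "ln (T t) < c * ln (\<phi> t)" by simp
    then have "ln (T t) / ln (\<phi> t) < c" using l by (simp add: pos_divide_less_eq)
    then show ?case by simp
  qed
  then have "phi_order \<phi> T \<le> ereal c" unfolding phi_order_def by (rule Limsup_bounded)
  with assms show False by simp
qed

lemma fwd:
  assumes "phi_order \<phi> T = ereal \<sigma>"
  shows "(\<forall>\<mu>>\<sigma>. improper_int_converges (f \<mu>)) \<and> (\<forall>\<mu><\<sigma>. \<not> improper_int_converges (f \<mu>))"
proof (intro conjI allI impI)
  fix \<mu> assume m: "\<mu> > \<sigma>"
  show "improper_int_converges (f \<mu>)"
  proof (rule conv[OF O2[of "(\<sigma>+\<mu>)/2"]])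
    show "phi_order \<phi> T < ereal ((\<sigma> + \<mu>) / 2)" using m assms by simp
    show "(\<sigma> + \<mu>) / 2 < \<mu>" using m by simp
  qed
next
  fix \<mu> assume m: "\<mu> < \<sigma>"
  have s0: "\<sigma> \<ge> 0" using O1 assms by simp
  show "\<not> improper_int_converges (f \<mu>)"
  proof (cases "\<mu> < 0")
    case True then show ?thesis by (rule div_neg)
  next
    case False
    define \<mu>' where "\<mu>' = max \<mu> (\<sigma>/2)"
    have m': "\<mu>' > 0" "\<mu>' < \<sigma>" "\<mu> \<le> \<mu>'" using False m s0 by (auto simp: \<mu>'_def)
    have "ereal ((\<mu>'+\<sigma>)/2) < phi_order \<phi> T" using m' assms by simp
    then have fr: "\<exists>\<^sub>F t in at_top. \<phi> t powr ((\<mu>'+\<sigma>)/2) \<le> T t" by (rule O3)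
    have "\<not> improper_int_converges (f \<mu>')"
      by (rule div_pos[OF m'(1) _ fr]) (use m' in simp)
    then show ?thesis using conv_mono[OF m'(3)] by blast
  qed
qed

lemma inf_case:
  assumes "phi_order \<phi> T = \<infinity>"
  shows "\<not> improper_int_converges (f \<mu>)"
proof (cases "\<mu> < 0")
  case True then show ?thesis by (rule div_neg)
next
  case False
  have "ereal (\<mu>+2) < phi_order \<phi> T" using assms by simp
  then have fr: "\<exists>\<^sub>F t in at_top. \<phi> t powr (\<mu>+2) \<le> T t" by (rule O3)
  have "\<not> improper_int_converges (f (\<mu>+1))"
    by (rule div_pos[OF _ _ fr]) (use False in simp_all)
  then show ?thesis using conv_mono[of \<mu> "\<mu>+1"] by auto
qed

end

theorem lemma3p5:
  fixes \<phi> T :: "real \<Rightarrow> real" and R\<^sub>0 :: real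
  assumes R0_pos: "R\<^sub>0 > 0"
    and phi_pos: "\<forall>r>R\<^sub>0. \<phi> r > 0"
    and phi_mono: "mono_on {R\<^sub>0<..} \<phi>"
    and phi_unbdd: "\<forall>M. \<exists>r>R\<^sub>0. \<phi> r > M"
    and phi_bounds: "\<forall>r>R\<^sub>0. ln r \<le> \<phi> r \<and> \<phi> r \<le> r"
    and phi_diff: "\<forall>r>R\<^sub>0. \<phi> differentiable (at r)"
    and T_pos: "\<forall>t>0. T t > 0"
    and T_int: "\<forall>a b. 0 < a \<longrightarrow> T integrable_on {a..b}"
    and T_mono: "mono_on {0<..} T"
    and T_unbdd: "\<forall>M. \<exists>t>0. T t > M"
  shows "(\<forall>\<rho>::real. \<rho> \<ge> 0 \<longrightarrow>
            (phi_order \<phi> T = ereal \<rho> \<longleftrightarrow>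
              ((\<forall>\<mu>>\<rho>. improper_int_converges
                          (\<lambda>t. deriv \<phi> t * T t / \<phi> t powr (\<mu> + 1))) \<and>
               (\<forall>\<mu><\<rho>. \<not> improper_int_converges
                          (\<lambda>t. deriv \<phi> t * T t / \<phi> t powr (\<mu> + 1))))))
       \<and> (phi_order \<phi> T = \<infinity> \<longrightarrow>
            (\<forall>\<mu>::real. \<not> improper_int_converges
                          (\<lambda>t. deriv \<phi> t * T t / \<phi> t powr (\<mu> + 1))))"
proof -
  interpret I: L \<phi> T R\<^sub>0
    by unfold_locales (use assms in auto)
  have fe: "(\<lambda>t. deriv \<phi> t * T t / \<phi> t powr (\<mu> + 1)) = I.f \<mu>" for \<mu>
    by (simp add: I.f_eq)
  show ?thesis
    unfolding fe
  proof (intro conjI allI impI)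
    fix \<mu> assume "phi_order \<phi> T = \<infinity>"
    then show "\<not> improper_int_converges (I.f \<mu>)" by (rule I.inf_case)
  next
    fix \<rho> :: real assume "\<rho> \<ge> 0"
    show "phi_order \<phi> T = ereal \<rho> \<longleftrightarrow>
          (\<forall>\<mu>>\<rho>. improper_int_converges (I.f \<mu>)) \<and> (\<forall>\<mu><\<rho>. \<not> improper_int_converges (I.f \<mu>))"
    proof
      assume "phi_order \<phi> T = ereal \<rho>"
      then show "(\<forall>\<mu>>\<rho>. improper_int_converges (I.f \<mu>)) \<and> (\<forall>\<mu><\<rho>. \<not> improper_int_converges (I.f \<mu>))"
        by (rule I.fwd)
    next
      assume h: "(\<forall>\<mu>>\<rho>. improper_int_converges (I.f \<mu>)) \<and> (\<forall>\<mu><\<rho>. \<not> improper_int_converges (I.f \<mu>))"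
      show "phi_order \<phi> T = ereal \<rho>"
      proof (cases "phi_order \<phi> T")
        case PInf
        then have "\<not> improper_int_converges (I.f (\<rho>+1))" by (rule I.inf_case)
        with h show ?thesis by auto
      next
        case MInf
        with I.O1 show ?thesis by simp
      next
        case (real s)
        note F = I.fwd[OF real]
        show ?thesis
        proof (cases s \<rho> rule: linorder_cases)
          case less
          then have "improper_int_converges (I.f ((s+\<rho>)/2))" using F by auto
          moreover have "\<not> improper_int_converges (I.f ((s+\<rho>)/2))" using h less by auto
          ultimately show ?thesis by blast
        next
          case equal then show ?thesis using real by simp
        next
          case greater
          then have "\<not> improper_int_converges (I.f ((s+\<rho>)/2))" using F by auto
          moreover have "improper_int_converges (I.f ((s+\<rho>)/2))" using h greater by auto
          ultimately show ?thesis by blast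
        qed
      qed
    qed
  qed
qed

end
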